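(* Let $\mathbf{L}$ be an intermediate propositional logic with $\vdash_{\mathbf{L}}\lnot A\lor\lnot\lnot A$ (for all $A$). Then the first $\varepsilon\tau$-theorem holds for negated formulas in $\varepsilon\tau(\mathbf{L})$: whenever $\vdash_{\varepsilon\tau(\mathbf{L})}\lnot A(e_1,\dots,e_n)$ for $\varepsilon$- or $\tau$-terms $e_1,\dots,e_n$, there are $\varepsilon\tau$-free terms $t_i^j$ such that $\vdash_{\mathbf{L}}\lnot A(t_1^1,\dots,t_n^1)\lor\dots\lor\lnot A(t_1^k,\dots,t_n^k)$. In particular this holds for $\varepsilon\tau(\mathbf{KC})$ and $\varepsilon\tau(\mathbf{LC})$.
   Context: Intermediate propositional logic: contains intuitionistic, contained in classical propositional logic, closed under modus ponens and substitution. $\mathbf{KC}$ is intuitionistic logic plus $\lnot A\lor\lnot\lnot A$; $\mathbf{LC}$ is intuitionistic logic plus $(A\to B)\lor(B\to A)$. $\varepsilon\tau$-terms: $\varepsilon x\,A(x)$, $\tau x\,A(x)$. Critical formulas: $A(t)\to A(\varepsilon x\,A(x))$ and $A(\tau x\,A(x))\to A(t)$. $\vdash_{\varepsilon\tau(\mathbf{L})}B$: derivable in the quantifier-free first-order language with $\varepsilon\tau$-terms from critical formulas using substitution instances of theorems of $\mathbf{L}$ and modus ponens; $\vdash_{\mathbf{L}}$: the same without critical formulas. A term is $\varepsilon\tau$-free if it contains no $\varepsilon\tau$-terms. *)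

theory Defs
  imports Main
begin

datatype pform = PVar nat | PBot | PAnd pform pform | POr pform pform | PImp pform pform

definition PNeg :: "pform \<Rightarrow> pform" where "PNeg A = PImp A PBot"

fun peval :: "(nat \<Rightarrow> bool) \<Rightarrow> pform \<Rightarrow> bool" where
  "peval v (PVar i) = v i"
| "peval v PBot = False"
| "peval v (PAnd A B) = (peval v A \<and> peval v B)"
| "peval v (POr A B) = (peval v A \<or> peval v B)"
| "peval v (PImp A B) = (peval v A \<longrightarrow> peval v B)"

definition CPC :: "pform set" where "CPC = {A. \<forall>v. peval v A}"

fun psubst :: "(nat \<Rightarrow> pform) \<Rightarrow> pform \<Rightarrow> pform" where
  "psubst s (PVar i) = s i"
| "psubst s PBot = PBot"
| "psubst s (PAnd A B) = PAnd (psubst s A) (psubst s B)"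
| "psubst s (POr A B) = POr (psubst s A) (psubst s B)"
| "psubst s (PImp A B) = PImp (psubst s A) (psubst s B)"

inductive_set ipc_axioms :: "pform set" where
  "PImp A (PImp B A) \<in> ipc_axioms"
| "PImp (PImp A (PImp B C)) (PImp (PImp A B) (PImp A C)) \<in> ipc_axioms"
| "PImp (PAnd A B) A \<in> ipc_axioms"
| "PImp (PAnd A B) B \<in> ipc_axioms"
| "PImp A (PImp B (PAnd A B)) \<in> ipc_axioms"
| "PImp A (POr A B) \<in> ipc_axioms"
| "PImp B (POr A B) \<in> ipc_axioms"
| "PImp (PImp A C) (PImp (PImp B C) (PImp (POr A B) C)) \<in> ipc_axioms"
| "PImp PBot A \<in> ipc_axioms"

inductive_set hilbert :: "pform set \<Rightarrow> pform set" for Ax :: "pform set" where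
  ax: "A \<in> ipc_axioms \<Longrightarrow> A \<in> hilbert Ax"
| extra: "A \<in> Ax \<Longrightarrow> A \<in> hilbert Ax"
| mp: "PImp A B \<in> hilbert Ax \<Longrightarrow> A \<in> hilbert Ax \<Longrightarrow> B \<in> hilbert Ax"

definition IPC :: "pform set" where "IPC = hilbert {}"

definition KC :: "pform set" where
  "KC = hilbert {POr (PNeg A) (PNeg (PNeg A)) | A. True}"

definition LC :: "pform set" where
  "LC = hilbert {POr (PImp A B) (PImp B A) | A B. True}"

definition intermediate_logic :: "pform set \<Rightarrow> bool" where
  "intermediate_logic L \<longleftrightarrow>
     IPC \<subseteq> L \<and> L \<subseteq> CPC \<and>
     (\<forall>A B. PImp A B \<in> L \<longrightarrow> A \<in> L \<longrightarrow> B \<in> L) \<and>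
     (\<forall>s A. A \<in> L \<longrightarrow> psubst s A \<in> L)"

text \<open>De Bruijn representation: variables are indices; Eps A and Tau A bind index 0 in A.\<close>
datatype trm = Var nat | Fn nat "trm list" | Eps fm | Tau fm
and fm = FBot | Atom nat "trm list" | FAnd fm fm | FOr fm fm | FImp fm fm

definition FNeg :: "fm \<Rightarrow> fm" where "FNeg A = FImp A FBot"

definition up_ren :: "(nat \<Rightarrow> nat) \<Rightarrow> nat \<Rightarrow> nat" where
  "up_ren r i = (case i of 0 \<Rightarrow> 0 | Suc j \<Rightarrow> Suc (r j))"

fun trename :: "(nat \<Rightarrow> nat) \<Rightarrow> trm \<Rightarrow> trm"
and frename :: "(nat \<Rightarrow> nat) \<Rightarrow> fm \<Rightarrow> fm" where
  "trename r (Var i) = Var (r i)"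
| "trename r (Fn f ts) = Fn f (map (trename r) ts)"
| "trename r (Eps A) = Eps (frename (up_ren r) A)"
| "trename r (Tau A) = Tau (frename (up_ren r) A)"
| "frename r FBot = FBot"
| "frename r (Atom p ts) = Atom p (map (trename r) ts)"
| "frename r (FAnd A B) = FAnd (frename r A) (frename r B)"
| "frename r (FOr A B) = FOr (frename r A) (frename r B)"
| "frename r (FImp A B) = FImp (frename r A) (frename r B)"

definition up_sub :: "(nat \<Rightarrow> trm) \<Rightarrow> nat \<Rightarrow> trm" where
  "up_sub s i = (case i of 0 \<Rightarrow> Var 0 | Suc j \<Rightarrow> trename Suc (s j))"

fun tsubst :: "(nat \<Rightarrow> trm) \<Rightarrow> trm \<Rightarrow> trm"
and fsubst :: "(nat \<Rightarrow> trm) \<Rightarrow> fm \<Rightarrow> fm" where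
  "tsubst s (Var i) = s i"
| "tsubst s (Fn f ts) = Fn f (map (tsubst s) ts)"
| "tsubst s (Eps A) = Eps (fsubst (up_sub s) A)"
| "tsubst s (Tau A) = Tau (fsubst (up_sub s) A)"
| "fsubst s FBot = FBot"
| "fsubst s (Atom p ts) = Atom p (map (tsubst s) ts)"
| "fsubst s (FAnd A B) = FAnd (fsubst s A) (fsubst s B)"
| "fsubst s (FOr A B) = FOr (fsubst s A) (fsubst s B)"
| "fsubst s (FImp A B) = FImp (fsubst s A) (fsubst s B)"

text \<open>A(t): instantiate the bound variable (index 0) of the body A by t.\<close>
definition inst :: "fm \<Rightarrow> trm \<Rightarrow> fm" where
  "inst A t = fsubst (\<lambda>i. case i of 0 \<Rightarrow> t | Suc j \<Rightarrow> Var j) A"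

fun tfree :: "trm \<Rightarrow> bool" and ffree :: "fm \<Rightarrow> bool" where
  "tfree (Var i) = True"
| "tfree (Fn f ts) = (\<forall>t\<in>set ts. tfree t)"
| "tfree (Eps A) = False"
| "tfree (Tau A) = False"
| "ffree FBot = True"
| "ffree (Atom p ts) = (\<forall>t\<in>set ts. tfree t)"
| "ffree (FAnd A B) = (ffree A \<and> ffree B)"
| "ffree (FOr A B) = (ffree A \<and> ffree B)"
| "ffree (FImp A B) = (ffree A \<and> ffree B)"

definition is_et_term :: "trm \<Rightarrow> bool" where
  "is_et_term t \<longleftrightarrow> (\<exists>A. t = Eps A \<or> t = Tau A)"

fun pinst :: "(nat \<Rightarrow> fm) \<Rightarrow> pform \<Rightarrow> fm" where
  "pinst s (PVar i) = s i"
| "pinst s PBot = FBot"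
| "pinst s (PAnd A B) = FAnd (pinst s A) (pinst s B)"
| "pinst s (POr A B) = FOr (pinst s A) (pinst s B)"
| "pinst s (PImp A B) = FImp (pinst s A) (pinst s B)"

text \<open>derives L True B: provable in epsilon-tau(L) (critical formulas allowed);
  derives L False B: provable in L (no critical formulas).\<close>
inductive derives :: "pform set \<Rightarrow> bool \<Rightarrow> fm \<Rightarrow> bool" for L :: "pform set" where
  thm_inst: "P \<in> L \<Longrightarrow> derives L c (pinst s P)"
| crit_eps: "c \<Longrightarrow> derives L c (FImp (inst A t) (inst A (Eps A)))"
| crit_tau: "c \<Longrightarrow> derives L c (FImp (inst A (Tau A)) (inst A t))"
| mp: "derives L c (FImp A B) \<Longrightarrow> derives L c A \<Longrightarrow> derives L c B"

abbreviation derives_et :: "pform set \<Rightarrow> fm \<Rightarrow> bool" where "derives_et L \<equiv> derives L True"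
abbreviation derives_L :: "pform set \<Rightarrow> fm \<Rightarrow> bool" where "derives_L L \<equiv> derives L False"

fun FDisj :: "fm list \<Rightarrow> fm" where
  "FDisj [] = FBot"
| "FDisj [A] = A"
| "FDisj (A # As) = FOr A (FDisj As)"

text \<open>A(t_1,...,t_n): replace variables 0..n-1 of A by the given terms, others unchanged.\<close>
definition inst_n :: "fm \<Rightarrow> nat \<Rightarrow> (nat \<Rightarrow> trm) \<Rightarrow> fm" where
  "inst_n A n e = fsubst (\<lambda>i. if i < n then e i else Var i) A"

definition first_et_theorem_neg :: "pform set \<Rightarrow> bool" where
  "first_et_theorem_neg L \<longleftrightarrow>
    (\<forall>A n e. ffree A \<and> (\<forall>i<n. is_et_term (e i)) \<and> derives_et L (FNeg (inst_n A n e))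
       \<longrightarrow> (\<exists>ts. ts \<noteq> [] \<and> (\<forall>u\<in>set ts. \<forall>i<n. tfree (u i)) \<and>
               derives_L L (FDisj (map (\<lambda>u. FNeg (inst_n A n u)) ts))))"

end

theory Submission
  imports Defs "HOL-Library.Countable"
begin


instance trm and fm :: countable by countable_datatype

primrec teval :: "(nat \<times> trm list \<Rightarrow> bool) \<Rightarrow> trm \<Rightarrow> (nat \<Rightarrow> trm) \<Rightarrow> trm"
and feval :: "(nat \<times> trm list \<Rightarrow> bool) \<Rightarrow> fm \<Rightarrow> (nat \<Rightarrow> trm) \<Rightarrow> bool" where
  "teval V (Var i) \<rho> = \<rho> i"
| "teval V (Fn f ts) \<rho> = Fn f (map (\<lambda>t. teval V t \<rho>) ts)"
| "teval V (trm.Eps A) \<rho> = (if \<exists>d. tfree d \<and> feval V A (case_nat d \<rho>) then (SOME d. tfree d \<and> feval V A (case_nat d \<rho>)) else Var 0)"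
| "teval V (Tau A) \<rho> = (if \<exists>d. tfree d \<and> \<not> feval V A (case_nat d \<rho>) then (SOME d. tfree d \<and> \<not> feval V A (case_nat d \<rho>)) else Var 0)"
| "feval V FBot \<rho> = False"
| "feval V (Atom p ts) \<rho> = V (p, map (\<lambda>t. teval V t \<rho>) ts)"
| "feval V (FAnd A B) \<rho> = (feval V A \<rho> \<and> feval V B \<rho>)"
| "feval V (FOr A B) \<rho> = (feval V A \<rho> \<or> feval V B \<rho>)"
| "feval V (FImp A B) \<rho> = (feval V A \<rho> \<longrightarrow> feval V B \<rho>)"

lemma teval_tfree: "tfree (teval V t \<rho>)" if "\<forall>i. tfree (\<rho> i)"
proof -
  have "\<forall>\<rho>. (\<forall>i. tfree (\<rho> i)) \<longrightarrow> tfree (teval V t \<rho>)"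
    by (rule trm.induct[of _ "\<lambda>_. True"]) (auto intro: someI2_ex)
  then show ?thesis using that by blast
qed

lemma up_ren_comp: "(\<lambda>a. case_nat d \<rho> (up_ren r a)) = case_nat d (\<lambda>a. \<rho> (r a))"
  by (rule ext) (simp add: up_ren_def split: nat.split)

lemma eval_rename0:
  "(\<forall>\<rho> r. teval V (trename r t) \<rho> = teval V t (\<rho> \<circ> r)) \<and>
  (\<forall>\<rho> r. feval V (frename r A) \<rho> = feval V A (\<rho> \<circ> r))"
  by (rule trm_fm.induct) (auto simp add: up_ren_comp comp_def cong: map_cong)

lemmas eval_rename = eval_rename0[THEN conjunct1, rule_format] eval_rename0[THEN conjunct2, rule_format]

lemma up_sub_eval: "(\<lambda>i. teval V (up_sub s i) (case_nat d \<rho>)) = case_nat d (\<lambda>i. teval V (s i) \<rho>)"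
  by (rule ext) (simp add: up_sub_def eval_rename comp_def split: nat.split)

lemma eval_subst0:
  "(\<forall>\<rho> s. teval V (tsubst s t) \<rho> = teval V t (\<lambda>i. teval V (s i) \<rho>)) \<and>
  (\<forall>\<rho> s. feval V (fsubst s A) \<rho> = feval V A (\<lambda>i. teval V (s i) \<rho>))"
  by (rule trm_fm.induct) (auto simp add: up_sub_eval cong: map_cong)

lemmas eval_subst = eval_subst0[THEN conjunct1, rule_format] eval_subst0[THEN conjunct2, rule_format]

lemma eval_inst: "feval V (inst A t) \<rho> = feval V A (case_nat (teval V t \<rho>) \<rho>)"
proof -
  have "(\<lambda>i. teval V (case i of 0 \<Rightarrow> t | Suc j \<Rightarrow> Var j) \<rho>) = case_nat (teval V t \<rho>) \<rho>"
    by (rule ext) (simp split: nat.split)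
  then show ?thesis by (simp add: inst_def eval_subst)
qed

lemma eval_pinst: "feval V (pinst s P) \<rho> = peval (\<lambda>i. feval V (s i) \<rho>) P"
  by (induction P) auto

lemma soundness:
  assumes "L \<subseteq> CPC" "derives L c B" "\<forall>i. tfree (\<rho> i)"
  shows "feval V B \<rho>"
  using assms(2,3)
proof (induction arbitrary: \<rho> rule: derives.induct)
  case (thm_inst P c s)
  then show ?case using assms(1) by (auto simp: CPC_def eval_pinst)
next
  case (crit_eps c A t)
  have tf: "tfree (teval V t \<rho>)" using crit_eps teval_tfree by blast
  show ?case
  proof (simp only: eval_inst feval.simps, rule impI)
    assume h: "feval V A (case_nat (teval V t \<rho>) \<rho>)"
    hence ex: "\<exists>d. tfree d \<and> feval V A (case_nat d \<rho>)" using tf by blast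
    show "feval V A (case_nat (teval V (trm.Eps A) \<rho>) \<rho>)" using someI_ex[OF ex] ex by simp
  qed
next
  case (crit_tau c A t)
  have tf: "tfree (teval V t \<rho>)" using crit_tau teval_tfree by blast
  show ?case
  proof (simp only: eval_inst feval.simps, rule impI, rule ccontr)
    assume h: "feval V A (case_nat (teval V (Tau A) \<rho>) \<rho>)"
      and n: "\<not> feval V A (case_nat (teval V t \<rho>) \<rho>)"
    hence ex: "\<exists>d. tfree d \<and> \<not> feval V A (case_nat d \<rho>)" using tf by blast
    show False using someI_ex[OF ex] ex h by simp
  qed
next
  case (mp c A B)
  then show ?case by auto
qed



inductive hd :: "pform set \<Rightarrow> fm set \<Rightarrow> fm \<Rightarrow> bool" for L \<Gamma> where
  base: "derives L False B \<Longrightarrow> hd L \<Gamma> B"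
| hyp: "B \<in> \<Gamma> \<Longrightarrow> hd L \<Gamma> B"
| hmp: "hd L \<Gamma> (FImp A B) \<Longrightarrow> hd L \<Gamma> A \<Longrightarrow> hd L \<Gamma> B"

lemma hd_empty: "hd L {} B \<Longrightarrow> derives L False B"
  by (induction rule: hd.induct) (auto intro: derives.mp)

lemma hd_mono: "hd L \<Gamma> B \<Longrightarrow> \<Gamma> \<subseteq> \<Delta> \<Longrightarrow> hd L \<Delta> B"
  by (induction rule: hd.induct) (auto intro: hd.intros)

lemma ipc_sub: "IPC \<subseteq> L \<Longrightarrow> P \<in> ipc_axioms \<Longrightarrow> hd L \<Gamma> (pinst s P)"
  unfolding IPC_def by (auto intro!: hd.base derives.thm_inst hilbert.ax)

definition s3 :: "fm \<Rightarrow> fm \<Rightarrow> fm \<Rightarrow> nat \<Rightarrow> fm" where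
  "s3 a b c i = (if i = 0 then a else if i = 1 then b else c)"

lemma s3_simps[simp]: "s3 a b c 0 = a" "s3 a b c (Suc 0) = b" "s3 a b c 2 = c"
  by (auto simp: s3_def)

context
  fixes L assumes ipc: "IPC \<subseteq> L"
begin

lemma ax_K: "hd L \<Gamma> (FImp A (FImp B A))"
  using ipc_sub[OF ipc ipc_axioms.intros(1)[of "PVar 0" "PVar 1"], of \<Gamma> "s3 A B B"] by simp
lemma ax_S: "hd L \<Gamma> (FImp (FImp A (FImp B C)) (FImp (FImp A B) (FImp A C)))"
  using ipc_sub[OF ipc ipc_axioms.intros(2)[of "PVar 0" "PVar 1" "PVar 2"], of \<Gamma> "s3 A B C"] by simp
lemma ax_c1: "hd L \<Gamma> (FImp (FAnd A B) A)"
  using ipc_sub[OF ipc ipc_axioms.intros(3)[of "PVar 0" "PVar 1"], of \<Gamma> "s3 A B B"] by simp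
lemma ax_c2: "hd L \<Gamma> (FImp (FAnd A B) B)"
  using ipc_sub[OF ipc ipc_axioms.intros(4)[of "PVar 0" "PVar 1"], of \<Gamma> "s3 A B B"] by simp
lemma ax_c3: "hd L \<Gamma> (FImp A (FImp B (FAnd A B)))"
  using ipc_sub[OF ipc ipc_axioms.intros(5)[of "PVar 0" "PVar 1"], of \<Gamma> "s3 A B B"] by simp
lemma ax_d1: "hd L \<Gamma> (FImp A (FOr A B))"
  using ipc_sub[OF ipc ipc_axioms.intros(6)[of "PVar 0" "PVar 1"], of \<Gamma> "s3 A B B"] by simp
lemma ax_d2: "hd L \<Gamma> (FImp B (FOr A B))"
  using ipc_sub[OF ipc ipc_axioms.intros(7)[of "PVar 1" "PVar 0"], of \<Gamma> "s3 A B B"] by simp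
lemma ax_d3: "hd L \<Gamma> (FImp (FImp A C) (FImp (FImp B C) (FImp (FOr A B) C)))"
  using ipc_sub[OF ipc ipc_axioms.intros(8)[of "PVar 0" "PVar 2" "PVar 1"], of \<Gamma> "s3 A B C"] by simp
lemma ax_bot: "hd L \<Gamma> (FImp FBot A)"
  using ipc_sub[OF ipc ipc_axioms.intros(9)[of "PVar 0"], of \<Gamma> "s3 A A A"] by simp

lemma hd_I: "hd L \<Gamma> (FImp A A)"
  by (meson ax_K ax_S hmp)

lemma deduction: "hd L (insert A \<Gamma>) B \<Longrightarrow> hd L \<Gamma> (FImp A B)"
proof (induction rule: hd.induct)
  case (base B)
  then show ?case by (meson ax_K hd.base hmp)
next
  case (hyp B)
  then show ?case by (metis ax_K hd.hyp hd_I hmp insertE)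
next
  case (hmp C B)
  then show ?case by (meson ax_S hd.hmp)
qed

lemma impE': "hd L \<Gamma> (FImp A B) \<Longrightarrow> hd L (insert A \<Gamma>) B"
  by (meson hd.hyp hd.hmp hd_mono insertI1 subset_insertI)

lemma cut: "hd L \<Gamma> A \<Longrightarrow> hd L (insert A \<Gamma>) B \<Longrightarrow> hd L \<Gamma> B"
  using deduction hmp by blast

lemma conjI': "hd L \<Gamma> A \<Longrightarrow> hd L \<Gamma> B \<Longrightarrow> hd L \<Gamma> (FAnd A B)"
  by (meson ax_c3 hmp)
lemma conjE1: "hd L \<Gamma> (FAnd A B) \<Longrightarrow> hd L \<Gamma> A"
  by (meson ax_c1 hmp)
lemma conjE2: "hd L \<Gamma> (FAnd A B) \<Longrightarrow> hd L \<Gamma> B"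
  by (meson ax_c2 hmp)
lemma disjI1': "hd L \<Gamma> A \<Longrightarrow> hd L \<Gamma> (FOr A B)"
  by (meson ax_d1 hmp)
lemma disjI2': "hd L \<Gamma> B \<Longrightarrow> hd L \<Gamma> (FOr A B)"
  by (meson ax_d2 hmp)
lemma disjE': "hd L \<Gamma> (FOr A B) \<Longrightarrow> hd L (insert A \<Gamma>) C \<Longrightarrow> hd L (insert B \<Gamma>) C \<Longrightarrow> hd L \<Gamma> C"
  by (meson ax_d3 deduction hmp)
lemma botE': "hd L \<Gamma> FBot \<Longrightarrow> hd L \<Gamma> A"
  by (meson ax_bot hmp)

end



fun pe :: "(nat \<times> trm list \<Rightarrow> bool) \<Rightarrow> fm \<Rightarrow> bool" where
  "pe V FBot = False"
| "pe V (Atom p ts) = V (p, ts)"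
| "pe V (FAnd A B) = (pe V A \<and> pe V B)"
| "pe V (FOr A B) = (pe V A \<or> pe V B)"
| "pe V (FImp A B) = (pe V A \<longrightarrow> pe V B)"

fun fatoms :: "fm \<Rightarrow> (nat \<times> trm list) set" where
  "fatoms FBot = {}"
| "fatoms (Atom p ts) = {(p, ts)}"
| "fatoms (FAnd A B) = fatoms A \<union> fatoms B"
| "fatoms (FOr A B) = fatoms A \<union> fatoms B"
| "fatoms (FImp A B) = fatoms A \<union> fatoms B"

lemma finite_fatoms: "finite (fatoms B)"
  by (induction B rule: fatoms.induct) auto

lemma pe_cong: "(\<forall>a\<in>fatoms B. V a = W a) \<Longrightarrow> pe V B = pe W B"
  by (induction B rule: fatoms.induct) auto

definition lit :: "(nat \<times> trm list \<Rightarrow> bool) \<Rightarrow> nat \<times> trm list \<Rightarrow> fm" where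
  "lit V a = (if V a then Atom (fst a) (snd a) else FNeg (Atom (fst a) (snd a)))"

context
  fixes L assumes ipc: "IPC \<subseteq> L"
begin

lemma weak: "hd L \<Gamma> B \<Longrightarrow> hd L (insert A \<Gamma>) B"
  by (erule hd_mono) auto

lemma hyp1: "hd L (insert A \<Gamma>) A"
  by (rule hd.hyp) auto

lemma kalmar: "fatoms B \<subseteq> X \<Longrightarrow> hd L (lit V ` X) (if pe V B then B else FNeg B)"
proof (induction B rule: fatoms.induct)
  case 1
  then show ?case by (simp add: FNeg_def hd_I[OF ipc])
next
  case (2 p ts)
  then have "lit V (p, ts) \<in> lit V ` X" by auto
  then have h: "hd L (lit V ` X) (lit V (p, ts))" by (rule hd.hyp)
  have "lit V (p, ts) = (if pe V (Atom p ts) then Atom p ts else FNeg (Atom p ts))"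
    by (simp add: lit_def)
  then show ?case using h by simp
next
  case (3 A B)
  then have a: "hd L (lit V ` X) (if pe V A then A else FNeg A)"
    and b: "hd L (lit V ` X) (if pe V B then B else FNeg B)" by auto
  show ?case
  proof (cases "pe V A")
    case ta: True
    show ?thesis
    proof (cases "pe V B")
      case True
      then show ?thesis using a b ta by (simp add: conjI'[OF ipc])
    next
      case False
      then show ?thesis using a b ta unfolding FNeg_def
        by (simp, meson deduction[OF ipc] conjE2[OF ipc] hyp1 hmp weak)
    qed
  next
    case False
    then show ?thesis using a unfolding FNeg_def
      by (simp, meson deduction[OF ipc] conjE1[OF ipc] hyp1 hmp weak)
  qed
next
  case (4 A B)
  then have a: "hd L (lit V ` X) (if pe V A then A else FNeg A)"
    and b: "hd L (lit V ` X) (if pe V B then B else FNeg B)" by auto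
  show ?case
  proof (cases "pe V A")
    case True
    then show ?thesis using a by (simp add: disjI1'[OF ipc])
  next
    case fa: False
    show ?thesis
    proof (cases "pe V B")
      case True
      then show ?thesis using b fa by (simp add: disjI2'[OF ipc])
    next
      case False
      then have "hd L (insert (FOr A B) (lit V ` X)) FBot"
        using a b fa unfolding FNeg_def
        by (simp, meson disjE'[OF ipc] hyp1 hmp weak)
      then show ?thesis using fa False unfolding FNeg_def by (simp add: deduction[OF ipc])
    qed
  qed
next
  case (5 A B)
  then have a: "hd L (lit V ` X) (if pe V A then A else FNeg A)"
    and b: "hd L (lit V ` X) (if pe V B then B else FNeg B)" by auto
  show ?case
  proof (cases "pe V B")
    case True
    then show ?thesis using b by (simp add: deduction[OF ipc] weak)
  next
    case fb: False
    show ?thesis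
    proof (cases "pe V A")
      case False
      then show ?thesis using a unfolding FNeg_def
        by (simp, meson deduction[OF ipc] botE'[OF ipc] hyp1 hmp weak)
    next
      case True
      then show ?thesis using a b fb unfolding FNeg_def
        by (simp, meson deduction[OF ipc] hyp1 hmp weak)
    qed
  qed
qed

lemma elim_atoms: "finite Y \<Longrightarrow> (\<forall>V. hd L (lit V ` Y \<union> \<Delta>) FBot) \<Longrightarrow> hd L \<Delta> FBot"
proof (induction Y rule: finite_induct)
  case empty
  then show ?case by simp
next
  case (insert a Y)
  have "hd L (lit V ` Y \<union> \<Delta>) FBot" for V
  proof -
    let ?\<Gamma> = "lit V ` Y \<union> \<Delta>"
    let ?P = "Atom (fst a) (snd a)"
    have e1: "lit (V(a:=True)) ` Y = lit V ` Y" "lit (V(a:=False)) ` Y = lit V ` Y"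
      using insert(2) by (auto simp: lit_def intro!: image_cong)
    have "hd L (lit (V(a:=True)) ` insert a Y \<union> \<Delta>) FBot" using insert(4) by blast
    then have h1: "hd L (insert ?P ?\<Gamma>) FBot" using e1 by (simp add: lit_def)
    have "hd L (lit (V(a:=False)) ` insert a Y \<union> \<Delta>) FBot" using insert(4) by blast
    then have h2: "hd L (insert (FNeg ?P) ?\<Gamma>) FBot" using e1 by (simp add: lit_def)
    show ?thesis using deduction[OF ipc h1] deduction[OF ipc h2] unfolding FNeg_def
      by (meson hmp)
  qed
  then show ?case using insert(3) by blast
qed

lemma unsat_bot: "(\<forall>V. \<exists>C\<in>set Cs. \<not> pe V C) \<Longrightarrow> hd L (set Cs) FBot"
proof -
  assume u: "\<forall>V. \<exists>C\<in>set Cs. \<not> pe V C"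
  let ?X = "\<Union>(fatoms ` set Cs)"
  have "finite ?X" by (simp add: finite_fatoms)
  moreover have "\<forall>V. hd L (lit V ` ?X \<union> set Cs) FBot"
  proof
    fix V
    obtain C where c: "C \<in> set Cs" "\<not> pe V C" using u by blast
    have "fatoms C \<subseteq> ?X" using c by auto
    from kalmar[OF this, of V] c have "hd L (lit V ` ?X) (FImp C FBot)" by (simp add: FNeg_def)
    then have "hd L (lit V ` ?X \<union> set Cs) (FImp C FBot)" by (rule hd_mono) auto
    moreover have "hd L (lit V ` ?X \<union> set Cs) C" using c by (auto intro: hd.hyp)
    ultimately show "hd L (lit V ` ?X \<union> set Cs) FBot" by (rule hmp)
  qed
  ultimately show ?thesis by (rule elim_atoms)
qed

lemma kc_disj:
  assumes kc: "\<forall>A. derives L False (FOr (FNeg A) (FNeg (FNeg A)))"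
  shows "Cs \<noteq> [] \<Longrightarrow> hd L (set Cs \<union> \<Gamma>) FBot \<Longrightarrow> hd L \<Gamma> (FDisj (map FNeg Cs))"
proof (induction Cs arbitrary: \<Gamma>)
  case Nil
  then show ?case by simp
next
  case (Cons C Cs')
  show ?case
  proof (cases "Cs' = []")
    case True
    then show ?thesis using Cons(3) by (simp add: FNeg_def deduction[OF ipc])
  next
    case False
    then obtain C' rest where cs': "Cs' = C' # rest" by (meson neq_Nil_conv)
    have eq: "FDisj (map FNeg (C # Cs')) = FOr (FNeg C) (FDisj (map FNeg Cs'))"
      using cs' by simp
    have "hd L (insert C (set Cs' \<union> \<Gamma>)) FBot" using Cons(3) by simp
    then have "hd L (set Cs' \<union> \<Gamma>) (FNeg C)" unfolding FNeg_def by (rule deduction[OF ipc])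
    then have "hd L (insert (FNeg (FNeg C)) (set Cs' \<union> \<Gamma>)) (FNeg C)" by (rule weak)
    then have "hd L (insert (FNeg (FNeg C)) (set Cs' \<union> \<Gamma>)) FBot"
      using hyp1[of "FNeg (FNeg C)"] unfolding FNeg_def by (meson hmp)
    then have "hd L (set Cs' \<union> insert (FNeg (FNeg C)) \<Gamma>) FBot" by simp
    from Cons.IH[OF False this]
    have r: "hd L (insert (FNeg (FNeg C)) \<Gamma>) (FDisj (map FNeg Cs'))" .
    have k: "hd L \<Gamma> (FOr (FNeg C) (FNeg (FNeg C)))" using kc by (auto intro: hd.base)
    show ?thesis unfolding eq
      by (rule disjE'[OF ipc k]) (auto intro: disjI1'[OF ipc] disjI2'[OF ipc] hyp1 r)
  qed
qed

end



type_synonym atm = "nat \<times> trm list"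

definition good :: "fm set \<Rightarrow> bool list \<Rightarrow> bool" where
  "good S bs \<longleftrightarrow> (\<forall>G\<subseteq>S. finite G \<longrightarrow>
     (\<exists>W. (\<forall>i<length bs. W (from_nat i :: atm) = bs ! i) \<and> (\<forall>B\<in>G. pe W B)))"

primrec bseq :: "fm set \<Rightarrow> nat \<Rightarrow> bool list" where
  "bseq S 0 = []"
| "bseq S (Suc k) = bseq S k @ [good S (bseq S k @ [True])]"

lemma bseq_len: "length (bseq S k) = k"
  by (induction k) auto

lemma bseq_prefix: "k \<le> m \<Longrightarrow> i < k \<Longrightarrow> bseq S m ! i = bseq S k ! i"
proof (induction m)
  case 0
  then show ?case by simp
next
  case (Suc m)
  show ?case
  proof (cases "k = Suc m")
    case True
    then show ?thesis by simp
  next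
    case False
    then have "k \<le> m" using Suc by simp
    then show ?thesis using Suc by (simp add: nth_append bseq_len)
  qed
qed

lemma good_bseq:
  assumes fin: "\<forall>G\<subseteq>S. finite G \<longrightarrow> (\<exists>V. \<forall>B\<in>G. pe V B)"
  shows "good S (bseq S k)"
proof (induction k)
  case 0
  then show ?case using fin by (simp add: good_def)
next
  case (Suc k)
  show ?case
  proof (cases "good S (bseq S k @ [True])")
    case True
    then show ?thesis by simp
  next
    case nt: False
    have "good S (bseq S k @ [False])"
    proof (rule ccontr)
      assume nf: "\<not> good S (bseq S k @ [False])"
      let ?b1 = "bseq S k @ [True]" and ?b2 = "bseq S k @ [False]"
      obtain G1 where g1: "G1 \<subseteq> S" "finite G1"
        "\<not> (\<exists>W. (\<forall>i<length ?b1. W (from_nat i :: atm) = ?b1 ! i) \<and> (\<forall>B\<in>G1. pe W B))"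
        using nt unfolding good_def by blast
      obtain G2 where g2: "G2 \<subseteq> S" "finite G2"
        "\<not> (\<exists>W. (\<forall>i<length ?b2. W (from_nat i :: atm) = ?b2 ! i) \<and> (\<forall>B\<in>G2. pe W B))"
        using nf unfolding good_def by blast
      have gs: "G1 \<union> G2 \<subseteq> S" "finite (G1 \<union> G2)" using g1 g2 by auto
      obtain W where w: "\<forall>i<length (bseq S k). W (from_nat i :: atm) = bseq S k ! i"
          "\<forall>B\<in>G1 \<union> G2. pe W B"
        using Suc.IH[unfolded good_def, THEN spec, of "G1 \<union> G2", THEN HOL.mp, OF gs(1), THEN HOL.mp, OF gs(2)]
        by blast
      have w1: "\<forall>i<k. W (from_nat i :: atm) = bseq S k ! i" using w(1) by (simp add: bseq_len)
      show False
      proof (cases "W (from_nat k)")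
        case True
        have "\<forall>i<length ?b1. W (from_nat i :: atm) = ?b1 ! i"
        proof (intro allI impI)
          fix i assume "i < length ?b1"
          then have "i < k \<or> i = k" by (simp add: bseq_len less_Suc_eq)
          then show "W (from_nat i :: atm) = ?b1 ! i"
            using w1 True by (auto simp: nth_append bseq_len)
        qed
        then show False using g1(3) w(2) by blast
      next
        case False
        have "\<forall>i<length ?b2. W (from_nat i :: atm) = ?b2 ! i"
        proof (intro allI impI)
          fix i assume "i < length ?b2"
          then have "i < k \<or> i = k" by (simp add: bseq_len less_Suc_eq)
          then show "W (from_nat i :: atm) = ?b2 ! i"
            using w1 False by (auto simp: nth_append bseq_len)
        qed
        then show False using g2(3) w(2) by blast
      qed
    qed
    then show ?thesis using nt by simp
  qed
qed

lemma compactness: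
  assumes fin: "\<forall>G\<subseteq>S. finite G \<longrightarrow> (\<exists>V. \<forall>B\<in>G. pe V B)"
  shows "\<exists>V. \<forall>B\<in>S. pe V B"
proof -
  define V where "V a = bseq S (Suc (to_nat a)) ! to_nat a" for a :: atm
  have "pe V B" if b: "B \<in> S" for B
  proof -
    define N where "N = Suc (Max (insert 0 (to_nat ` fatoms B)))"
    have lt: "to_nat a < N" if "a \<in> fatoms B" for a
      using that finite_fatoms[of B] unfolding N_def by (simp add: le_imp_less_Suc)
    obtain W where w: "\<forall>i<N. W (from_nat i :: atm) = bseq S N ! i" "pe W B"
      using good_bseq[OF fin, of N] b unfolding good_def bseq_len
      by (metis empty_subsetI finite.emptyI finite.insertI insert_subset singletonI)
    have "\<forall>a\<in>fatoms B. V a = W a"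
    proof
      fix a assume a: "a \<in> fatoms B"
      have "W a = W (from_nat (to_nat a))" by simp
      also have "\<dots> = bseq S N ! to_nat a" using w(1) lt[OF a] by blast
      also have "\<dots> = bseq S (Suc (to_nat a)) ! to_nat a"
        using lt[OF a] by (intro bseq_prefix) auto
      finally show "V a = W a" by (simp add: V_def)
    qed
    then show ?thesis using pe_cong w(2) by blast
  qed
  then show ?thesis by blast
qed

lemma teval_tfree_id: "(tfree t \<longrightarrow> (\<forall>\<sigma>. teval V t \<sigma> = tsubst \<sigma> t)) \<and>
  (ffree A \<longrightarrow> (\<forall>\<sigma>. feval V A \<sigma> = pe V (fsubst \<sigma> A)))"
  by (rule trm_fm.induct) (auto cong: map_cong)

lemma main:
  assumes ipc: "IPC \<subseteq> L" and cpc: "L \<subseteq> CPC"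
    and kc: "\<forall>A. derives L False (FOr (FNeg A) (FNeg (FNeg A)))"
  shows "first_et_theorem_neg L"
  unfolding first_et_theorem_neg_def
proof (intro allI impI, elim conjE)
  fix A n e
  assume fA: "ffree A" and d: "derives_et L (FNeg (inst_n A n e))"
  define U where "U = {u. \<forall>i<n. tfree (u i)}"
  define f where "f u = inst_n A n u" for u
  have nosat: "\<not> (\<exists>V. \<forall>B\<in>f ` U. pe V B)"
  proof
    assume "\<exists>V. \<forall>B\<in>f ` U. pe V B"
    then obtain V where V: "\<forall>B\<in>f ` U. pe V B" by blast
    define us where "us i = teval V (e i) Var" for i
    have usU: "us \<in> U" unfolding U_def us_def by (auto intro: teval_tfree)
    have "feval V (FNeg (inst_n A n e)) Var"
      by (rule soundness[OF cpc d]) simp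
    then have nf: "\<not> feval V (inst_n A n e) Var" by (simp add: FNeg_def)
    have "feval V (inst_n A n e) Var = feval V A (\<lambda>i. if i < n then us i else Var i)"
      unfolding inst_n_def eval_subst
      by (rule arg_cong[where f="feval V A"]) (auto simp: us_def)
    also have "\<dots> = pe V (f us)"
      using teval_tfree_id fA by (simp add: f_def inst_n_def)
    finally show False using nf V usU by blast
  qed
  obtain G where G: "G \<subseteq> f ` U" "finite G" "\<not> (\<exists>V. \<forall>B\<in>G. pe V B)"
    using compactness[of "f ` U"] nosat by blast
  obtain U0 where U0: "U0 \<subseteq> U" "finite U0" "G = f ` U0"
    using G(1,2) by (meson finite_subset_image)
  obtain ts where ts: "set ts = U0" using U0(2) finite_list by blast
  have ne: "ts \<noteq> []" using G(3) U0(3) ts by auto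
  have "\<forall>V. \<exists>C\<in>set (map f ts). \<not> pe V C" using G(3) U0(3) ts by auto
  then have "hd L (set (map f ts)) FBot" by (rule unsat_bot[OF ipc])
  then have "hd L {} (FDisj (map FNeg (map f ts)))"
    using kc_disj[OF ipc kc, of "map f ts" "{}"] ne by simp
  then have "derives_L L (FDisj (map (\<lambda>u. FNeg (inst_n A n u)) ts))"
    by (simp add: f_def comp_def hd_empty)
  moreover have "\<forall>u\<in>set ts. \<forall>i<n. tfree (u i)" using ts U0(1) U_def by auto
  ultimately show "\<exists>ts. ts \<noteq> [] \<and> (\<forall>u\<in>set ts. \<forall>i<n. tfree (u i)) \<and>
               derives_L L (FDisj (map (\<lambda>u. FNeg (inst_n A n u)) ts))"
    using ne by blast
qed



lemma hilbert_mono: "A \<in> hilbert Ax \<Longrightarrow> Ax \<subseteq> Bx \<Longrightarrow> A \<in> hilbert Bx"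
  by (induction rule: hilbert.induct) (auto intro: hilbert.intros)

lemma ipc_taut: "A \<in> ipc_axioms \<Longrightarrow> peval v A"
  by (induction rule: ipc_axioms.induct) auto

lemma hilbert_sound: "A \<in> hilbert Ax \<Longrightarrow> (\<forall>B\<in>Ax. \<forall>v. peval v B) \<Longrightarrow> peval v A"
  by (induction rule: hilbert.induct) (auto simp: ipc_taut)

lemma KC_props: "IPC \<subseteq> KC" "KC \<subseteq> CPC"
  unfolding IPC_def KC_def CPC_def
  by (auto intro: hilbert_mono elim!: hilbert_sound simp: PNeg_def)

lemma LC_props: "IPC \<subseteq> LC" "LC \<subseteq> CPC"
  unfolding IPC_def LC_def CPC_def
  by (auto intro: hilbert_mono elim!: hilbert_sound)

lemma KC_kc: "derives KC False (FOr (FNeg A) (FNeg (FNeg A)))"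
proof -
  have "POr (PNeg (PVar 0)) (PNeg (PNeg (PVar 0))) \<in> KC"
    unfolding KC_def by (rule hilbert.extra) blast
  from derives.thm_inst[OF this, where s="\<lambda>_. A" and c=False] show ?thesis
    by (simp add: PNeg_def FNeg_def)
qed

lemma LC_kc: "derives LC False (FOr (FNeg A) (FNeg (FNeg A)))"
proof -
  have "POr (PImp (PVar 0) (PNeg (PVar 0))) (PImp (PNeg (PVar 0)) (PVar 0)) \<in> LC"
    unfolding LC_def by (rule hilbert.extra) blast
  from derives.thm_inst[OF this, where s="\<lambda>_. A" and c=False]
  have ax: "hd LC {} (FOr (FImp A (FNeg A)) (FImp (FNeg A) A))"
    by (simp add: PNeg_def FNeg_def hd.base)
  note ipc = LC_props(1)
  have c1: "hd LC {FImp A (FNeg A)} (FNeg A)"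
    unfolding FNeg_def
    by (rule deduction[OF ipc]) (meson hd.hyp hmp insertI1 insertI2)
  have c2: "hd LC {FImp (FNeg A) A} (FNeg (FNeg A))"
    unfolding FNeg_def
    by (rule deduction[OF ipc]) (meson hd.hyp hmp insertI1 insertI2)
  have "hd LC {} (FOr (FNeg A) (FNeg (FNeg A)))"
    by (rule disjE'[OF ipc ax]) (auto intro: disjI1'[OF ipc] disjI2'[OF ipc] c1 c2)
  then show ?thesis by (rule hd_empty)
qed

theorem mainTheorem6:
  shows "(\<forall>L. intermediate_logic L \<and> (\<forall>A. POr (PNeg A) (PNeg (PNeg A)) \<in> L)
            \<longrightarrow> first_et_theorem_neg L)
         \<and> first_et_theorem_neg KC \<and> first_et_theorem_neg LC"
proof (intro conjI allI impI)
  fix L assume h: "intermediate_logic L \<and> (\<forall>A. POr (PNeg A) (PNeg (PNeg A)) \<in> L)"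
  have kc: "\<forall>A. derives L False (FOr (FNeg A) (FNeg (FNeg A)))"
  proof
    fix A
    from derives.thm_inst[of "POr (PNeg (PVar 0)) (PNeg (PNeg (PVar 0)))" L False "\<lambda>_. A"] h
    show "derives L False (FOr (FNeg A) (FNeg (FNeg A)))" by (simp add: PNeg_def FNeg_def)
  qed
  show "first_et_theorem_neg L"
    using h kc by (intro main) (auto simp: intermediate_logic_def)
next
  show "first_et_theorem_neg KC" using KC_props KC_kc by (intro main) auto
next
  show "first_et_theorem_neg LC" using LC_props LC_kc by (intro main) auto
qed


end
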